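(* Let $c,\Gamma,\sigma>0$, $q\ge0$, $\theta\in\mathbb{R}$, and consider $$\dot y=-cy-zy-qy^3+d,\qquad \dot z=\Gamma y^2-\sigma z-\sigma\theta,\qquad x=(y,z)\in\mathbb{R}^2,\ d\in\mathbb{R}$$ (the closed loop of $\dot y=\theta y+u+d$ with $u=-cy-\hat\theta y-qy^3$, $\dot{\hat\theta}=\Gamma y^2-\sigma\hat\theta$, $z=\hat\theta-\theta$). Then for every $x(0)\in\mathbb{R}^2$ and $d\in L^\infty(\mathbb{R}_+;\mathbb{R})$ the solution exists for all $t\ge0$ and satisfies $$|x(t)|\le e^{-\min(c,\sigma)t/2}\sqrt{\max(\Gamma,1/\Gamma)}\,|x(0)|+\sqrt{\frac{\max(\Gamma,1)}{c\min(c,\sigma)}}\,\|d\|_\infty+|\theta|\sqrt{\frac{\sigma}{\min(\Gamma,1)\min(c,\sigma)}}.$$ Moreover, if $\theta>c$ and $d\equiv0$, then $\Big(\pm\sqrt{\frac{\sigma(\theta-c)}{\Gamma+\sigma q}},\ -\frac{\Gamma c+\theta\sigma q}{\Gamma+\sigma q}\Big)$ are equilibrium points of this system. *)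

theory Defs
  imports "HOL-Probability.Probability"
begin

definition Linf_pos :: "(real \<Rightarrow> real) \<Rightarrow> bool" where
  "Linf_pos d \<longleftrightarrow> d \<in> borel_measurable (restrict_space lebesgue {0..})
     \<and> esssup (restrict_space lebesgue {0..}) (\<lambda>t. ereal \<bar>d t\<bar>) < \<infinity>"

definition Linf_norm :: "(real \<Rightarrow> real) \<Rightarrow> real" where
  "Linf_norm d = real_of_ereal (esssup (restrict_space lebesgue {0..}) (\<lambda>t. ereal \<bar>d t\<bar>))"

definition fy :: "real \<Rightarrow> real \<Rightarrow> real \<Rightarrow> real \<Rightarrow> real \<Rightarrow> real" where
  "fy c q y z dv = - c * y - z * y - q * y ^ 3 + dv"

definition fz :: "real \<Rightarrow> real \<Rightarrow> real \<Rightarrow> real \<Rightarrow> real \<Rightarrow> real" where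
  "fz \<Gamma> \<sigma> \<theta> y z = \<Gamma> * y ^ 2 - \<sigma> * z - \<sigma> * \<theta>"

definition is_solution ::
  "real \<Rightarrow> real \<Rightarrow> real \<Rightarrow> real \<Rightarrow> real \<Rightarrow> (real \<Rightarrow> real) \<Rightarrow> (real \<Rightarrow> real) \<Rightarrow> (real \<Rightarrow> real) \<Rightarrow> bool"
where
  "is_solution c \<Gamma> \<sigma> q \<theta> d y z \<longleftrightarrow>
     continuous_on {0..} y \<and> continuous_on {0..} z \<and>
     (\<forall>t\<ge>0. ((\<lambda>s. fy c q (y s) (z s) (d s)) has_integral (y t - y 0)) {0..t}
           \<and> ((\<lambda>s. fz \<Gamma> \<sigma> \<theta> (y s) (z s)) has_integral (z t - z 0)) {0..t})"

end

theory Submission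
  imports Defs
begin



definition gr :: "real \<Rightarrow> real \<Rightarrow> nat \<Rightarrow> nat \<Rightarrow> real" where
  "gr a b n i = a + real i * (b - a) / real n"

lemma gr_mono:
  assumes "a \<le> b" "i \<le> j" shows "gr a b n i \<le> gr a b n j"
proof -
  have "real i * (b - a) \<le> real j * (b - a)" using assms by (intro mult_right_mono) auto
  then show ?thesis unfolding gr_def by (simp add: divide_right_mono)
qed

lemma gr_0 [simp]: "gr a b n 0 = a" by (simp add: gr_def)
lemma gr_n [simp]: "n > 0 \<Longrightarrow> gr a b n n = b" by (simp add: gr_def)

lemma gr_in:
  assumes "a \<le> b" "i \<le> n" "n > 0" shows "gr a b n i \<in> {a..b}"
  using gr_mono[OF assms(1), of 0 i n] gr_mono[OF assms(1) assms(2), of n] assms by auto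

lemma gr_step: "n > 0 \<Longrightarrow> gr a b n (Suc i) - gr a b n i = (b - a) / real n"
  by (simp add: gr_def field_simps)

lemma sum_integrals_grid:
  fixes H :: "real \<Rightarrow> 'a::banach"
  assumes H: "H integrable_on {a..b}" and ab: "a \<le> b" and n: "n > 0"
  shows "(\<Sum>i<n. integral {gr a b n i .. gr a b n (Suc i)} H) = integral {a..b} H"
proof -
  have "k \<le> n \<Longrightarrow> (\<Sum>i<k. integral {gr a b n i .. gr a b n (Suc i)} H) = integral {a..gr a b n k} H" for k
  proof (induction k)
    case 0 then show ?case by simp
  next
    case (Suc k)
    have s: "{a..gr a b n (Suc k)} \<subseteq> {a..b}" using gr_in[OF ab Suc.prems n] by auto
    have "integral {a..gr a b n k} H + integral {gr a b n k .. gr a b n (Suc k)} H = integral {a..gr a b n (Suc k)} H"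
      apply (rule Henstock_Kurzweil_Integration.integral_combine)
      using gr_mono[OF ab, of 0 k n] gr_mono[OF ab, of k "Suc k" n] integrable_on_subinterval[OF H s] by auto
    then show ?case using Suc by simp
  qed
  from this[of n] n show ?thesis by simp
qed

lemma RS_approx:
  fixes f G :: "real \<Rightarrow> real"
  assumes fi: "f absolutely_integrable_on {a..b}" and G: "continuous_on {a..b} G"
    and ab: "a \<le> b" and e: "e > 0"
  shows "\<exists>N>0. \<forall>n\<ge>N. \<forall>\<tau>. (\<forall>i<n. \<tau> i \<in> {gr a b n i .. gr a b n (Suc i)}) \<longrightarrow>
     \<bar>(\<Sum>i<n. G (\<tau> i) * integral {gr a b n i .. gr a b n (Suc i)} f) - integral {a..b} (\<lambda>s. f s * G s)\<bar> \<le> e"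
proof -
  define A where "A = integral {a..b} (\<lambda>s. \<bar>f s\<bar>)"
  have A0: "A \<ge> 0" unfolding A_def by (rule integral_nonneg) (use fi in \<open>auto simp: absolutely_integrable_on_def\<close>)
  define e' where "e' = e / (1 + A)"
  have e'0: "e' > 0" using e A0 by (simp add: e'_def)
  have e'A: "e' * A \<le> e"
  proof -
    have "e' * A \<le> e' * (1 + A)" using e'0 by simp
    also have "\<dots> = e" using A0 by (simp add: e'_def)
    finally show ?thesis .
  qed
  have "uniformly_continuous_on {a..b} G" using G compact_uniformly_continuous by blast
  then obtain \<delta> where d0: "\<delta> > 0" and dG: "\<And>s s'. s \<in> {a..b} \<Longrightarrow> s' \<in> {a..b} \<Longrightarrow> dist s' s < \<delta> \<Longrightarrow> dist (G s') (G s) < e'"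
    unfolding uniformly_continuous_on_def using e'0 by metis
  define N where "N = nat \<lceil>(b - a) / \<delta>\<rceil> + 1"
  have N0: "N > 0" by (simp add: N_def)
  have fint: "f integrable_on {a..b}" using fi by (simp add: absolutely_integrable_on_def)
  have afint: "(\<lambda>s. \<bar>f s\<bar>) integrable_on {a..b}" using fi by (simp add: absolutely_integrable_on_def)
  have Gm: "G \<in> borel_measurable (lebesgue_on {a..b})"
    by (rule continuous_imp_measurable_on_sets_lebesgue[OF G]) auto
  have Gb: "bounded (G ` {a..b})" using compact_continuous_image[OF G] compact_imp_bounded by blast
  have fGi: "(\<lambda>s. G s * f s) absolutely_integrable_on {a..b}"
    by (rule absolutely_integrable_bounded_measurable_product_real[OF Gm _ Gb fi]) auto
  hence fGint: "(\<lambda>s. f s * G s) integrable_on {a..b}"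
    by (simp add: absolutely_integrable_on_def mult.commute)
  have "\<forall>n\<ge>N. \<forall>\<tau>. (\<forall>i<n. \<tau> i \<in> {gr a b n i .. gr a b n (Suc i)}) \<longrightarrow>
     \<bar>(\<Sum>i<n. G (\<tau> i) * integral {gr a b n i .. gr a b n (Suc i)} f) - integral {a..b} (\<lambda>s. f s * G s)\<bar> \<le> e"
  proof (intro allI impI)
    fix n :: nat and \<tau> :: "nat \<Rightarrow> real"
    assume nN: "N \<le> n" and tau: "\<forall>i<n. \<tau> i \<in> {gr a b n i .. gr a b n (Suc i)}"
    have n0: "n > 0" using nN N0 by simp
    have hd: "(b - a) / real n < \<delta>"
    proof -
      have "(b - a) / \<delta> < real n" using nN unfolding N_def by linarith
      then have "b - a < real n * \<delta>" using d0 by (simp add: field_simps)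
      then show ?thesis using n0 by (simp add: field_simps)
    qed
    define I where "I i = {gr a b n i .. gr a b n (Suc i)}" for i
    have Isub: "i < n \<Longrightarrow> I i \<subseteq> {a..b}" for i
      using gr_in[OF ab, of i n] gr_in[OF ab, of "Suc i" n] n0 by (auto simp: I_def)
    have Iint: "i < n \<Longrightarrow> I i = {gr a b n i .. gr a b n (Suc i)}" for i by (simp add: I_def)
    have fI: "f integrable_on I i" if "i < n" for i
      using integrable_on_subinterval[OF fint Isub[OF that, unfolded I_def]] by (simp add: I_def)
    have afI: "(\<lambda>s. \<bar>f s\<bar>) integrable_on I i" if "i < n" for i
      using integrable_on_subinterval[OF afint Isub[OF that, unfolded I_def]] by (simp add: I_def)
    have fGI: "(\<lambda>s. f s * G s) integrable_on I i" if "i < n" for i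
      using integrable_on_subinterval[OF fGint Isub[OF that, unfolded I_def]] by (simp add: I_def)
    have eq1: "(\<Sum>i<n. integral (I i) (\<lambda>s. f s * G s)) = integral {a..b} (\<lambda>s. f s * G s)"
      using sum_integrals_grid[OF fGint ab n0] by (simp add: I_def)
    have eq2: "(\<Sum>i<n. integral (I i) (\<lambda>s. \<bar>f s\<bar>)) = A"
      using sum_integrals_grid[OF afint ab n0] by (simp add: I_def A_def)
    have "(\<Sum>i<n. G (\<tau> i) * integral (I i) f) - integral {a..b} (\<lambda>s. f s * G s)
        = (\<Sum>i<n. integral (I i) (\<lambda>s. f s * (G (\<tau> i) - G s)))"
    proof -
      have "(\<Sum>i<n. G (\<tau> i) * integral (I i) f) - integral {a..b} (\<lambda>s. f s * G s)
          = (\<Sum>i<n. G (\<tau> i) * integral (I i) f - integral (I i) (\<lambda>s. f s * G s))"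
        by (simp add: eq1[symmetric] sum_subtractf)
      also have "\<dots> = (\<Sum>i<n. integral (I i) (\<lambda>s. f s * (G (\<tau> i) - G s)))"
      proof (rule sum.cong[OF refl])
        fix i assume "i \<in> {..<n}"
        then have i: "i < n" by simp
        have "integral (I i) (\<lambda>s. f s * (G (\<tau> i) - G s)) = integral (I i) (\<lambda>s. f s * G (\<tau> i) - f s * G s)"
          by (simp add: algebra_simps)
        also have "\<dots> = integral (I i) (\<lambda>s. f s * G (\<tau> i)) - integral (I i) (\<lambda>s. f s * G s)"
          by (rule integral_diff) (use fI[OF i] fGI[OF i] in \<open>auto intro: integrable_on_mult_left\<close>)
        also have "integral (I i) (\<lambda>s. f s * G (\<tau> i)) = integral (I i) f * G (\<tau> i)"
          by simp
        finally show "G (\<tau> i) * integral (I i) f - integral (I i) (\<lambda>s. f s * G s) = integral (I i) (\<lambda>s. f s * (G (\<tau> i) - G s))"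
          by (simp add: mult.commute)
      qed
      finally show ?thesis .
    qed
    also have "\<bar>\<dots>\<bar> \<le> (\<Sum>i<n. \<bar>integral (I i) (\<lambda>s. f s * (G (\<tau> i) - G s))\<bar>)"
      by (rule sum_abs)
    also have "\<dots> \<le> (\<Sum>i<n. integral (I i) (\<lambda>s. \<bar>f s\<bar> * e'))"
    proof (rule sum_mono)
      fix i assume "i \<in> {..<n}"
      then have i: "i < n" by simp
      have ti: "\<tau> i \<in> I i" using tau i by (simp add: I_def)
      show "\<bar>integral (I i) (\<lambda>s. f s * (G (\<tau> i) - G s))\<bar> \<le> integral (I i) (\<lambda>s. \<bar>f s\<bar> * e')"
        unfolding real_norm_def[symmetric]
      proof (rule integral_norm_bound_integral)
        have "(\<lambda>s. (G (\<tau> i) - G s) * f s) integrable_on I i"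
        proof -
          have G2: "continuous_on (I i) (\<lambda>s. G (\<tau> i) - G s)"
            using continuous_on_subset[OF G Isub[OF i]] by (intro continuous_intros)
          have "(\<lambda>s. (G (\<tau> i) - G s) * f s) absolutely_integrable_on I i"
            apply (rule absolutely_integrable_bounded_measurable_product_real)
            using G2 apply (rule continuous_imp_measurable_on_sets_lebesgue) apply (simp add: I_def)
             apply (simp add: I_def)
            using compact_continuous_image[OF G2] compact_imp_bounded apply (force simp: I_def)
            using absolutely_integrable_on_subinterval[OF fi] Isub[OF i] by (force simp: I_def)
          then show ?thesis by (simp add: absolutely_integrable_on_def)
        qed
        then show "(\<lambda>s. f s * (G (\<tau> i) - G s)) integrable_on I i" by (simp add: mult.commute)
        show "(\<lambda>s. norm (f s) * e') integrable_on I i" using afI[OF i] unfolding real_norm_def by (rule integrable_on_mult_left)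
        fix s assume s: "s \<in> I i"
        have "dist s (\<tau> i) < \<delta>"
        proof -
          have "\<bar>s - \<tau> i\<bar> \<le> gr a b n (Suc i) - gr a b n i" using s ti by (auto simp: I_def)
          then show ?thesis using gr_step[OF n0, of a b i] hd by (simp add: dist_real_def)
        qed
        then have "\<bar>G (\<tau> i) - G s\<bar> < e'" using dG[of s "\<tau> i"] Isub[OF i] s ti by (force simp: dist_real_def abs_minus_commute)
        then show "norm (f s * (G (\<tau> i) - G s)) \<le> norm (f s) * e'"
          by (simp add: abs_mult mult_left_mono)
      qed
    qed
    also have "\<dots> = e' * A"
      by (simp add: eq2[symmetric] sum_distrib_left mult.commute)
    also have "\<dots> \<le> e" by (rule e'A)
    finally show "\<bar>(\<Sum>i<n. G (\<tau> i) * integral {gr a b n i .. gr a b n (Suc i)} f) - integral {a..b} (\<lambda>s. f s * G s)\<bar> \<le> e"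
      by (simp add: I_def)
  qed
  then show ?thesis using N0 by blast
qed




lemma integral_incr:
  fixes f F :: "real \<Rightarrow> real"
  assumes Fi: "\<And>t. t \<in> {a..b} \<Longrightarrow> (f has_integral (F t - F a)) {a..t}"
    and st: "a \<le> s" "s \<le> t" "t \<le> b"
  shows "integral {s..t} f = F t - F s"
proof -
  have ht: "(f has_integral (F t - F a)) {a..t}" using Fi st by auto
  have hs: "(f has_integral (F s - F a)) {a..s}" using Fi st by auto
  have i: "f integrable_on {a..t}" using ht by (rule has_integral_integrable)
  have "integral {a..s} f + integral {s..t} f = integral {a..t} f"
    by (rule Henstock_Kurzweil_Integration.integral_combine[OF st(1,2) i])
  moreover have "integral {a..s} f = F s - F a" using hs by (rule integral_unique)
  moreover have "integral {a..t} f = F t - F a" using ht by (rule integral_unique)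
  ultimately show ?thesis by simp
qed

lemma indef_cont:
  fixes f F :: "real \<Rightarrow> real"
  assumes Fi: "\<And>t. t \<in> {a..b} \<Longrightarrow> (f has_integral (F t - F a)) {a..t}" and ab: "a \<le> b"
  shows "continuous_on {a..b} F"
proof -
  have i: "f integrable_on {a..b}" using Fi[of b] ab by (auto intro: has_integral_integrable)
  have "continuous_on {a..b} (\<lambda>t. F a + integral {a..t} f)"
    by (intro continuous_intros indefinite_integral_continuous_1 i)
  moreover have "F a + integral {a..t} f = F t" if "t \<in> {a..b}" for t
    using integral_unique[OF Fi[OF that]] by simp
  ultimately show ?thesis by (rule continuous_on_eq) auto
qed

lemma alg1: "(x1::real) * y1 - x0 * y0 = y1 * (x1 - x0) + x0 * (y1 - y0)"
  by (simp add: algebra_simps)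

lemma alg2: "\<bar>(x::real) - p\<bar> \<le> e/2 \<Longrightarrow> \<bar>y - q\<bar> \<le> e/2 \<Longrightarrow> \<bar>(x+y) - (p+q)\<bar> \<le> e"
  by linarith

lemma product_rule_integral:
  fixes f g F G :: "real \<Rightarrow> real"
  assumes ab: "a \<le> b"
    and fi: "f absolutely_integrable_on {a..b}" and gi: "g absolutely_integrable_on {a..b}"
    and Fi: "\<And>t. t \<in> {a..b} \<Longrightarrow> (f has_integral (F t - F a)) {a..t}"
    and Gi: "\<And>t. t \<in> {a..b} \<Longrightarrow> (g has_integral (G t - G a)) {a..t}"
  shows "((\<lambda>s. f s * G s + F s * g s) has_integral (F b * G b - F a * G a)) {a..b}"
proof -
  have Fc: "continuous_on {a..b} F" by (rule indef_cont[OF Fi ab])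
  have Gc: "continuous_on {a..b} G" by (rule indef_cont[OF Gi ab])
  have int1: "(\<lambda>s. f s * G s) integrable_on {a..b}"
  proof -
    have "(\<lambda>s. G s * f s) absolutely_integrable_on {a..b}"
      apply (rule absolutely_integrable_bounded_measurable_product_real[OF _ _ _ fi])
      using Gc apply (rule continuous_imp_measurable_on_sets_lebesgue) apply simp apply simp
      using compact_continuous_image[OF Gc] compact_imp_bounded by blast
    then show ?thesis by (simp add: absolutely_integrable_on_def mult.commute)
  qed
  have int2: "(\<lambda>s. g s * F s) integrable_on {a..b}"
  proof -
    have "(\<lambda>s. F s * g s) absolutely_integrable_on {a..b}"
      apply (rule absolutely_integrable_bounded_measurable_product_real[OF _ _ _ gi])
      using Fc apply (rule continuous_imp_measurable_on_sets_lebesgue) apply simp apply simp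
      using compact_continuous_image[OF Fc] compact_imp_bounded by blast
    then show ?thesis by (simp add: absolutely_integrable_on_def mult.commute)
  qed
  define P where "P = integral {a..b} (\<lambda>s. f s * G s) + integral {a..b} (\<lambda>s. g s * F s)"
  have bnd: "\<bar>F b * G b - F a * G a - P\<bar> \<le> e" if e: "e > 0" for e
  proof -
    obtain N1 where N1: "N1 > 0" "\<And>n \<tau>. n \<ge> N1 \<Longrightarrow> (\<forall>i<n. \<tau> i \<in> {gr a b n i .. gr a b n (Suc i)}) \<Longrightarrow>
      \<bar>(\<Sum>i<n. G (\<tau> i) * integral {gr a b n i .. gr a b n (Suc i)} f) - integral {a..b} (\<lambda>s. f s * G s)\<bar> \<le> e/2"
      using RS_approx[OF fi Gc ab, of "e/2"] e by auto
    obtain N2 where N2: "N2 > 0" "\<And>n \<tau>. n \<ge> N2 \<Longrightarrow> (\<forall>i<n. \<tau> i \<in> {gr a b n i .. gr a b n (Suc i)}) \<Longrightarrow>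
      \<bar>(\<Sum>i<n. F (\<tau> i) * integral {gr a b n i .. gr a b n (Suc i)} g) - integral {a..b} (\<lambda>s. g s * F s)\<bar> \<le> e/2"
      using RS_approx[OF gi Fc ab, of "e/2"] e by auto
    define n where "n = max N1 N2"
    have n0: "n > 0" using N1 by (simp add: n_def)
    have nN: "N1 \<le> n" "N2 \<le> n" by (auto simp: n_def)
    let ?t = "gr a b n"
    have tin: "i \<le> n \<Longrightarrow> ?t i \<in> {a..b}" for i using gr_in[OF ab _ n0] by blast
    have tle: "?t i \<le> ?t (Suc i)" for i using gr_mono[OF ab, of i "Suc i"] by simp
    have S1: "\<bar>(\<Sum>i<n. G (?t (Suc i)) * integral {?t i .. ?t (Suc i)} f) - integral {a..b} (\<lambda>s. f s * G s)\<bar> \<le> e/2"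
      by (rule N1(2)[OF nN(1)]) (auto simp: tle)
    have S2: "\<bar>(\<Sum>i<n. F (?t i) * integral {?t i .. ?t (Suc i)} g) - integral {a..b} (\<lambda>s. g s * F s)\<bar> \<le> e/2"
      by (rule N2(2)[OF nN(2)]) (auto simp: tle)
    have "F b * G b - F a * G a = (\<Sum>i<n. F (?t (Suc i)) * G (?t (Suc i)) - F (?t i) * G (?t i))"
      using sum_lessThan_telescope[of "\<lambda>i. F (?t i) * G (?t i)" n] unfolding gr_n[OF n0] gr_0 by (rule sym)
    also have "\<dots> = (\<Sum>i<n. G (?t (Suc i)) * integral {?t i .. ?t (Suc i)} f + F (?t i) * integral {?t i .. ?t (Suc i)} g)"
    proof (rule sum.cong[OF refl])
      fix i assume "i \<in> {..<n}"
      then have i: "i < n" by simp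
      have a1: "a \<le> ?t i" "?t (Suc i) \<le> b" using tin[of i] tin[of "Suc i"] i by auto
      have "integral {?t i .. ?t (Suc i)} f = F (?t (Suc i)) - F (?t i)"
        by (rule integral_incr[OF Fi a1(1) tle a1(2)])
      moreover have "integral {?t i .. ?t (Suc i)} g = G (?t (Suc i)) - G (?t i)"
        by (rule integral_incr[OF Gi a1(1) tle a1(2)])
      ultimately show "F (?t (Suc i)) * G (?t (Suc i)) - F (?t i) * G (?t i) =
          G (?t (Suc i)) * integral {?t i .. ?t (Suc i)} f + F (?t i) * integral {?t i .. ?t (Suc i)} g"
        using alg1 by metis
    qed
    finally have "F b * G b - F a * G a = (\<Sum>i<n. G (?t (Suc i)) * integral {?t i .. ?t (Suc i)} f) + (\<Sum>i<n. F (?t i) * integral {?t i .. ?t (Suc i)} g)"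
      by (simp add: sum.distrib)
    then show ?thesis using alg2[OF S1 S2] unfolding P_def by simp
  qed
  have eq: "F b * G b - F a * G a = P"
  proof (rule ccontr)
    assume ne: "F b * G b - F a * G a \<noteq> P"
    define e where "e = \<bar>F b * G b - F a * G a - P\<bar> / 2"
    have "e > 0" using ne by (simp add: e_def)
    then have "\<bar>F b * G b - F a * G a - P\<bar> \<le> e" by (rule bnd)
    then show False using \<open>e > 0\<close> by (simp add: e_def)
  qed
  have "((\<lambda>s. f s * G s + g s * F s) has_integral P) {a..b}"
    unfolding P_def by (intro has_integral_add integrable_integral int1 int2)
  then show ?thesis using eq by (simp add: mult.commute)
qed




lemma alg_key:
  fixes c \<Gamma> \<sigma> q \<theta> m M Y Z D :: real
  assumes "c > 0" "\<Gamma> > 0" "\<sigma> > 0" "q \<ge> 0" "m > 0" "m \<le> c" "m \<le> \<sigma>" "\<bar>D\<bar> \<le> M"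
  shows "fy c q Y Z D * Y + fz \<Gamma> \<sigma> \<theta> Y Z * (Z / \<Gamma>) + m * (Y\<^sup>2 / 2 + Z\<^sup>2 / (2 * \<Gamma>))
     \<le> M\<^sup>2 / (2 * c) + \<sigma> * \<theta>\<^sup>2 / (2 * \<Gamma>)"
proof -
  have e: "fy c q Y Z D * Y + fz \<Gamma> \<sigma> \<theta> Y Z * (Z / \<Gamma>) + m * (Y\<^sup>2 / 2 + Z\<^sup>2 / (2 * \<Gamma>))
     = - c * Y\<^sup>2 - q * (Y\<^sup>2)\<^sup>2 + D * Y - \<sigma> * Z\<^sup>2 / \<Gamma> - \<sigma> * \<theta> * Z / \<Gamma> + m * Y\<^sup>2 / 2 + m * Z\<^sup>2 / (2 * \<Gamma>)"
    using assms by (simp add: fy_def fz_def field_simps power2_eq_square power3_eq_cube)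
  have h1: "D * Y \<le> c * Y\<^sup>2 / 2 + D\<^sup>2 / (2 * c)"
  proof -
    have "0 \<le> (c * Y - D)\<^sup>2" by simp
    then have "2 * c * (D * Y) \<le> c * c * Y\<^sup>2 + D\<^sup>2" by (simp add: power2_eq_square algebra_simps)
    then show ?thesis using assms(1) by (simp add: field_simps power2_eq_square)
  qed
  have h2: "D\<^sup>2 \<le> M\<^sup>2" using assms(8) by (metis abs_ge_zero abs_le_square_iff abs_of_nonneg order_trans)
  have h3: "- (\<sigma> * \<theta> * Z / \<Gamma>) \<le> \<sigma> * Z\<^sup>2 / (2 * \<Gamma>) + \<sigma> * \<theta>\<^sup>2 / (2 * \<Gamma>)"
  proof -
    have "0 \<le> \<sigma> * (Z + \<theta>)\<^sup>2" using assms by simp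
    then have "- (2 * (\<sigma> * \<theta> * Z)) \<le> \<sigma> * Z\<^sup>2 + \<sigma> * \<theta>\<^sup>2" by (simp add: power2_eq_square algebra_simps)
    then show ?thesis using assms(2) by (simp add: field_simps)
  qed
  have h4: "m * Y\<^sup>2 / 2 \<le> c * Y\<^sup>2 / 2" using assms by (simp add: mult_right_mono)
  have h4': "m * Z\<^sup>2 / (2 * \<Gamma>) \<le> \<sigma> * Z\<^sup>2 / (2 * \<Gamma>)"
    using assms by (simp add: divide_right_mono mult_right_mono)
  have h5: "0 \<le> q * (Y\<^sup>2)\<^sup>2" using assms by simp
  have h6: "D\<^sup>2 / (2 * c) \<le> M\<^sup>2 / (2 * c)" using h2 assms by (simp add: divide_right_mono)
  have h7: "\<sigma> * Z\<^sup>2 / \<Gamma> = \<sigma> * Z\<^sup>2 / (2 * \<Gamma>) + \<sigma> * Z\<^sup>2 / (2 * \<Gamma>)" by (simp add: field_simps)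
  show ?thesis unfolding e using h1 h3 h4 h4' h5 h6 h7 by linarith
qed

lemma alg_final:
  fixes \<Gamma> m E c M \<sigma> \<theta> Y Z Y0 Z0 K :: real
  assumes "\<Gamma> > 0" "m > 0" "E > 0" "c > 0"
    and K: "K = M\<^sup>2 / (2 * c) + \<sigma> * \<theta>\<^sup>2 / (2 * \<Gamma>)"
    and V: "Y\<^sup>2 / 2 + Z\<^sup>2 / (2 * \<Gamma>) \<le> E * (Y0\<^sup>2 / 2 + Z0\<^sup>2 / (2 * \<Gamma>)) + K / m"
  shows "Y\<^sup>2 + Z\<^sup>2 \<le> max \<Gamma> (1 / \<Gamma>) * E * (Y0\<^sup>2 + Z0\<^sup>2) + max \<Gamma> 1 * M\<^sup>2 / (c * m)
           + max \<Gamma> 1 * \<sigma> * \<theta>\<^sup>2 / (\<Gamma> * m)"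
proof -
  define G where "G = max \<Gamma> 1"
  have G1: "G \<ge> 1" "G \<ge> \<Gamma>" by (auto simp: G_def)
  have a: "Y\<^sup>2 + Z\<^sup>2 \<le> 2 * G * (Y\<^sup>2 / 2 + Z\<^sup>2 / (2 * \<Gamma>))"
  proof -
    have "Y\<^sup>2 \<le> G * Y\<^sup>2" using G1 by (simp add: mult_le_cancel_right1)
    moreover have "Z\<^sup>2 \<le> G * (Z\<^sup>2 / \<Gamma>)"
    proof -
      have "Z\<^sup>2 = \<Gamma> * (Z\<^sup>2 / \<Gamma>)" using assms by simp
      also have "\<dots> \<le> G * (Z\<^sup>2 / \<Gamma>)" using G1 assms by (intro mult_right_mono) auto
      finally show ?thesis .
    qed
    moreover have "2 * G * (Y\<^sup>2 / 2 + Z\<^sup>2 / (2 * \<Gamma>)) = G * Y\<^sup>2 + G * (Z\<^sup>2 / \<Gamma>)"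
      using assms by (simp add: field_simps)
    ultimately show ?thesis by linarith
  qed
  have b: "G * (Y0\<^sup>2 + Z0\<^sup>2 / \<Gamma>) \<le> max \<Gamma> (1 / \<Gamma>) * (Y0\<^sup>2 + Z0\<^sup>2)"
  proof (cases "\<Gamma> \<ge> 1")
    case True
    have "1/\<Gamma> \<le> 1" using True by simp
    then have "1/\<Gamma> \<le> \<Gamma>" using True by linarith
    then have "G = \<Gamma>" "max \<Gamma> (1/\<Gamma>) = \<Gamma>" using True by (auto simp: G_def intro!: max_absorb1)
    moreover have "Z0\<^sup>2 / \<Gamma> \<le> Z0\<^sup>2"
    proof -
      have "Z0\<^sup>2 * 1 \<le> Z0\<^sup>2 * \<Gamma>" by (rule mult_left_mono) (use True in auto)
      then show ?thesis using assms by (simp add: divide_le_eq)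
    qed
    ultimately show ?thesis using assms
      by (metis add_left_mono less_imp_le mult_left_mono)
  next
    case False
    have "1 \<le> 1/\<Gamma>" using False assms by simp
    then have "\<Gamma> \<le> 1/\<Gamma>" using False by linarith
    then have G1: "G = 1" and mx: "max \<Gamma> (1/\<Gamma>) = 1/\<Gamma>" using False by (auto simp: G_def intro!: max_absorb2)
    have Y0: "Y0\<^sup>2 \<le> Y0\<^sup>2 / \<Gamma>"
    proof -
      have "Y0\<^sup>2 * \<Gamma> \<le> Y0\<^sup>2 * 1" by (rule mult_left_mono) (use False in auto)
      then show ?thesis using assms by (simp add: le_divide_eq)
    qed
    have "G * (Y0\<^sup>2 + Z0\<^sup>2 / \<Gamma>) = Y0\<^sup>2 + Z0\<^sup>2 / \<Gamma>" using G1 by simp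
    also have "\<dots> \<le> Y0\<^sup>2 / \<Gamma> + Z0\<^sup>2 / \<Gamma>" using Y0 by simp
    also have "\<dots> = max \<Gamma> (1 / \<Gamma>) * (Y0\<^sup>2 + Z0\<^sup>2)" using mx by (simp add: add_divide_distrib)
    finally show ?thesis .
  qed
  have "Y\<^sup>2 + Z\<^sup>2 \<le> 2 * G * (E * (Y0\<^sup>2 / 2 + Z0\<^sup>2 / (2 * \<Gamma>)) + K / m)"
    using a V G1 by (smt (verit) mult_left_mono)
  also have "\<dots> = E * (G * (Y0\<^sup>2 + Z0\<^sup>2 / \<Gamma>)) + G * M\<^sup>2 / (c * m) + G * \<sigma> * \<theta>\<^sup>2 / (\<Gamma> * m)"
    using assms unfolding K by (simp add: field_simps)
  also have "\<dots> \<le> E * (max \<Gamma> (1 / \<Gamma>) * (Y0\<^sup>2 + Z0\<^sup>2)) + G * M\<^sup>2 / (c * m) + G * \<sigma> * \<theta>\<^sup>2 / (\<Gamma> * m)"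
    using b assms by (simp add: mult_left_mono)
  finally show ?thesis by (simp add: G_def mult_ac)
qed




lemma exp_integral:
  fixes m t :: real
  assumes "t \<ge> 0"
  shows "((\<lambda>s. m * exp (m * s)) has_integral (exp (m * t) - exp (m * 0))) {0..t}"
proof (rule fundamental_theorem_of_calculus[OF assms])
  fix x :: real
  have "((\<lambda>s. exp (m * s)) has_real_derivative (exp (m * x) * m)) (at x within {0..t})"
    by (rule DERIV_exp[THEN DERIV_chain2]) (auto intro!: derivative_eq_intros)
  then show "((\<lambda>s. exp (m * s)) has_vector_derivative m * exp (m * x)) (at x within {0..t})"
    by (simp add: has_real_derivative_iff_has_vector_derivative mult.commute)
qed

lemma bound_lemma:
  fixes c \<Gamma> \<sigma> q \<theta> M T :: real and y z d :: "real \<Rightarrow> real"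
  assumes pos: "c > 0" "\<Gamma> > 0" "\<sigma> > 0" "q \<ge> 0"
    and T: "T \<ge> 0"
    and dM: "\<And>s. s \<ge> 0 \<Longrightarrow> \<bar>d s\<bar> \<le> M"
    and dint: "d absolutely_integrable_on {0..T}"
    and yi: "\<And>t. t \<in> {0..T} \<Longrightarrow> ((\<lambda>s. fy c q (y s) (z s) (d s)) has_integral (y t - y 0)) {0..t}"
    and zi: "\<And>t. t \<in> {0..T} \<Longrightarrow> ((\<lambda>s. fz \<Gamma> \<sigma> \<theta> (y s) (z s)) has_integral (z t - z 0)) {0..t}"
  shows "(y T)\<^sup>2 + (z T)\<^sup>2 \<le> max \<Gamma> (1 / \<Gamma>) * exp (- min c \<sigma> * T) * ((y 0)\<^sup>2 + (z 0)\<^sup>2)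
           + max \<Gamma> 1 * M\<^sup>2 / (c * min c \<sigma>) + max \<Gamma> 1 * \<sigma> * \<theta>\<^sup>2 / (\<Gamma> * min c \<sigma>)"
proof -
  define m where "m = min c \<sigma>"
  have m0: "m > 0" "m \<le> c" "m \<le> \<sigma>" using pos by (auto simp: m_def)
  define g where "g = (\<lambda>s. fy c q (y s) (z s) (d s))"
  define h where "h = (\<lambda>s. fz \<Gamma> \<sigma> \<theta> (y s) (z s))"
  have yc: "continuous_on {0..T} y" by (rule indef_cont[OF _ T]) (use yi in \<open>simp add: g_def\<close>)
  have zc: "continuous_on {0..T} z" by (rule indef_cont[OF _ T]) (use zi in \<open>simp add: h_def\<close>)
  have gi: "g absolutely_integrable_on {0..T}"
  proof -
    have "(\<lambda>s. (- c * y s - z s * y s - q * y s ^ 3) + d s) absolutely_integrable_on {0..T}"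
      by (intro set_integral_add(1) dint absolutely_integrable_continuous_real continuous_intros yc zc)
    then show ?thesis by (simp add: g_def fy_def)
  qed
  have hi: "h absolutely_integrable_on {0..T}"
    unfolding h_def fz_def by (intro absolutely_integrable_continuous_real continuous_intros yc zc)
  have meas: "S \<in> sets lebesgue" if "S = {0..(t::real)}" for S t using that by simp
  have prodI: "(\<lambda>s. k s * f s) absolutely_integrable_on {0..T}"
    if "continuous_on {0..T} k" "f absolutely_integrable_on {0..T}" for k f :: "real \<Rightarrow> real"
    apply (rule absolutely_integrable_bounded_measurable_product_real[OF _ _ _ that(2)])
    using that(1) apply (rule continuous_imp_measurable_on_sets_lebesgue) apply simp apply simp
    using compact_continuous_image[OF that(1)] compact_imp_bounded by blast
  define V where "V = (\<lambda>s. (y s)\<^sup>2 / 2 + (z s)\<^sup>2 / (2 * \<Gamma>))"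
  define v where "v = (\<lambda>s. g s * y s + h s * (z s / \<Gamma>))"
  have vi: "v absolutely_integrable_on {0..T}"
  proof -
    have "(\<lambda>s. y s * g s + (z s / \<Gamma>) * h s) absolutely_integrable_on {0..T}"
      by (intro set_integral_add(1) prodI gi hi yc continuous_intros zc) (use pos in auto)
    then show ?thesis by (simp add: v_def mult.commute)
  qed
  have Vi: "(v has_integral (V t - V 0)) {0..t}" if t: "t \<in> {0..T}" for t
  proof -
    have sub: "{0..t} \<subseteq> {0..T}" using t by auto
    have gy: "((\<lambda>s. g s * y s + y s * g s) has_integral (y t * y t - y 0 * y 0)) {0..t}"
      apply (rule product_rule_integral)
      using t apply simp
      using absolutely_integrable_on_subinterval[OF gi sub] apply simp
      using absolutely_integrable_on_subinterval[OF gi sub] apply simp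
      using yi t by (auto simp: g_def)
    have hz: "((\<lambda>s. h s * z s + z s * h s) has_integral (z t * z t - z 0 * z 0)) {0..t}"
      apply (rule product_rule_integral)
      using t apply simp
      using absolutely_integrable_on_subinterval[OF hi sub] apply simp
      using absolutely_integrable_on_subinterval[OF hi sub] apply simp
      using zi t by (auto simp: h_def)
    have "((\<lambda>s. (1/2) * (g s * y s + y s * g s) + (1 / (2 * \<Gamma>)) * (h s * z s + z s * h s)) has_integral
           ((1/2) * (y t * y t - y 0 * y 0) + (1 / (2 * \<Gamma>)) * (z t * z t - z 0 * z 0))) {0..t}"
      by (intro has_integral_add has_integral_mult_right gy hz)
    moreover have "(\<lambda>s. (1/2) * (g s * y s + y s * g s) + (1 / (2 * \<Gamma>)) * (h s * z s + z s * h s)) = v"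
      by (rule ext) (use pos in \<open>simp add: v_def field_simps\<close>)
    moreover have "(1/2) * (y t * y t - y 0 * y 0) + (1 / (2 * \<Gamma>)) * (z t * z t - z 0 * z 0) = V t - V 0"
      using pos by (simp add: V_def field_simps power2_eq_square)
    ultimately show ?thesis by simp
  qed
  have ei: "(\<lambda>s. m * exp (m * s)) absolutely_integrable_on {0..T}"
    by (intro absolutely_integrable_continuous_real continuous_intros)
  have P3: "((\<lambda>s. v s * exp (m * s) + V s * (m * exp (m * s))) has_integral
              (V T * exp (m * T) - V 0 * exp (m * 0))) {0..T}"
    apply (rule product_rule_integral[OF T vi ei])
    using Vi apply simp
    using exp_integral by simp
  define K where "K = M\<^sup>2 / (2 * c) + \<sigma> * \<theta>\<^sup>2 / (2 * \<Gamma>)"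
  have KI: "((\<lambda>s. K / m * (m * exp (m * s))) has_integral (K / m * (exp (m * T) - exp (m * 0)))) {0..T}"
    by (rule has_integral_mult_right[OF exp_integral[OF T, of m]])
  have le: "v s * exp (m * s) + V s * (m * exp (m * s)) \<le> K / m * (m * exp (m * s))" if s: "s \<in> {0..T}" for s
  proof -
    have "v s + m * V s \<le> K"
      using alg_key[OF pos m0(1-3) dM[of s], of "y s" "z s" \<theta>] s
      by (simp add: v_def V_def g_def h_def K_def)
    then have "(v s + m * V s) * exp (m * s) \<le> K * exp (m * s)" by (simp add: mult_right_mono)
    then show ?thesis using m0 by (simp add: algebra_simps)
  qed
  have main: "V T * exp (m * T) - V 0 \<le> K * (exp (m * T) - 1) / m"
    using has_integral_le[OF P3 KI le] by simp
  have Vb: "V T \<le> exp (- m * T) * V 0 + K / m"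
  proof -
    have K0: "K \<ge> 0" using pos by (simp add: K_def)
    have E1: "exp (m * T) * exp (- m * T) = 1" by (simp add: exp_add[symmetric])
    have "V T * exp (m * T) \<le> V 0 + K * (exp (m * T) - 1) / m" using main by simp
    then have "V T * exp (m * T) * exp (- m * T) \<le> (V 0 + K * (exp (m * T) - 1) / m) * exp (- m * T)"
      by (simp add: mult_right_mono)
    also have "\<dots> = exp (- m * T) * V 0 + K * (exp (m * T) * exp (- m * T) - exp (- m * T)) / m"
      using m0 by (simp add: field_simps)
    also have "\<dots> = exp (- m * T) * V 0 + K * (1 - exp (- m * T)) / m"
      by (subst E1) (rule refl)
    also have "\<dots> \<le> exp (- m * T) * V 0 + K / m"
      using K0 m0 by (simp add: divide_right_mono mult_left_le)
    finally show ?thesis by (simp add: exp_minus field_simps)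
  qed
  show ?thesis
    using alg_final[OF pos(2) m0(1) exp_gt_zero[of "- m * T"] pos(1) K_def, where ?Y="y T" and ?Z="z T" and ?Y0="y 0" and ?Z0="z 0"] Vb
    unfolding V_def m_def by (simp add: mult_ac)
qed




lemma cont_halfline:
  fixes g :: "real \<Rightarrow> 'a::topological_space"
  assumes "\<And>T. T \<ge> 0 \<Longrightarrow> continuous_on {0..T} g"
  shows "continuous_on {0..} g"
  unfolding continuous_on_eq_continuous_within
proof
  fix x :: real assume x: "x \<in> {0..}"
  have "at x within {0..} = at x within {0..x+1}"
    by (rule at_within_nhd[where S="{x - 1 <..< x + 1}"]) auto
  moreover have "continuous (at x within {0..x+1}) g"
    using assms[of "x+1"] x by (auto simp: continuous_on_eq_continuous_within)
  ultimately show "continuous (at x within {0..}) g" by (simp add: continuous_within)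
qed

lemma pow_integral:
  fixes t :: real
  assumes "t \<ge> 0"
  shows "((\<lambda>s. s ^ n) has_integral (t ^ Suc n / real (Suc n))) {0..t}"
proof -
  have "((\<lambda>s. s ^ n) has_integral (t ^ Suc n / real (Suc n) - 0 ^ Suc n / real (Suc n))) {0..t}"
  proof (rule fundamental_theorem_of_calculus[OF assms])
    fix x :: real
    have "((\<lambda>s. s ^ Suc n / real (Suc n)) has_real_derivative (real (Suc n) * x ^ n / real (Suc n))) (at x within {0..t})"
      using DERIV_cdivide[OF DERIV_pow[of "Suc n" x "{0..t}"], of "real (Suc n)"] by simp
    then show "((\<lambda>s. s ^ Suc n / real (Suc n)) has_vector_derivative x ^ n) (at x within {0..t})"
      by (simp add: has_real_derivative_iff_has_vector_derivative)
  qed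
  then show ?thesis by simp
qed

lemma picard_global:
  fixes F :: "real \<Rightarrow> 'a::euclidean_space \<Rightarrow> 'a" and x0 :: 'a and L :: real
  assumes cont: "\<And>x. continuous_on {0..} x \<Longrightarrow> continuous_on {0..} (\<lambda>s. F s (x s))"
    and lip: "\<And>s p p'. s \<ge> 0 \<Longrightarrow> norm (F s p - F s p') \<le> L * norm (p - p')"
    and L: "L \<ge> 0"
  shows "\<exists>x. continuous_on {0..} x \<and> x 0 = x0 \<and> (\<forall>t\<ge>0. ((\<lambda>s. F s (x s)) has_integral (x t - x0)) {0..t})"
proof -
  define X where "X = rec_nat (\<lambda>t. x0) (\<lambda>k Xk t. x0 + integral {0..t} (\<lambda>s. F s (Xk s)))"
  have X0: "X 0 = (\<lambda>t. x0)" by (simp add: X_def)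
  have XS: "X (Suc k) = (\<lambda>t. x0 + integral {0..t} (\<lambda>s. F s (X k s)))" for k by (simp add: X_def)
  have XC: "continuous_on {0..} (X k)" for k
  proof (induction k)
    case 0 then show ?case by (simp add: X0)
  next
    case (Suc k)
    have c: "continuous_on {0..} (\<lambda>s. F s (X k s))" by (rule cont[OF Suc])
    have "continuous_on {0..} (\<lambda>t. integral {0..t} (\<lambda>s. F s (X k s)))"
    proof (rule cont_halfline)
      fix T :: real assume "T \<ge> 0"
      have "(\<lambda>s. F s (X k s)) integrable_on {0..T}"
        by (rule integrable_continuous_interval) (use continuous_on_subset[OF c] in auto)
      then show "continuous_on {0..T} (\<lambda>t. integral {0..t} (\<lambda>s. F s (X k s)))"
        by (rule indefinite_integral_continuous_1)
    qed
    then show ?case unfolding XS by (intro continuous_intros)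
  qed
  have Fint: "(\<lambda>s. F s (X k s)) integrable_on {0..t}" for k t
    by (rule integrable_continuous_interval) (use continuous_on_subset[OF cont[OF XC[of k]]] in auto)
  have Xat0: "X k 0 = x0" for k by (cases k) (simp_all add: X0 XS)
  have est: "\<exists>B\<ge>0. \<forall>k. \<forall>t\<in>{0..T}. norm (X (Suc k) t - X k t) \<le> B * L ^ k * t ^ Suc k / fact (Suc k)"
    if T: "T \<ge> 0" for T
  proof -
    have "compact ((\<lambda>s. F s x0) ` {0..T})"
      by (rule compact_continuous_image) (use continuous_on_subset[OF cont[of "\<lambda>s. x0"]] in auto)
    then obtain B where B: "B > 0" "\<And>s. s \<in> {0..T} \<Longrightarrow> norm (F s x0) \<le> B"
      using compact_imp_bounded bounded_pos by (metis imageI)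
    have "\<forall>t\<in>{0..T}. norm (X (Suc k) t - X k t) \<le> B * L ^ k * t ^ Suc k / fact (Suc k)" for k
    proof (induction k)
      case 0
      show ?case
      proof
        fix t assume t: "t \<in> {0..T}"
        have "norm (integral {0..t} (\<lambda>s. F s x0)) \<le> integral {0..t} (\<lambda>s. B)"
          by (rule integral_norm_bound_integral) (use Fint[of 0 t] t B in \<open>auto simp: X0\<close>)
        then show "norm (X (Suc 0) t - X 0 t) \<le> B * L ^ 0 * t ^ Suc 0 / fact (Suc 0)"
          using t by (simp add: XS X0 mult.commute)
      qed
    next
      case (Suc k)
      show ?case
      proof
        fix t assume t: "t \<in> {0..T}"
        have "X (Suc (Suc k)) t - X (Suc k) t = integral {0..t} (\<lambda>s. F s (X (Suc k) s) - F s (X k s))"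
        proof -
          have "X (Suc (Suc k)) t - X (Suc k) t = integral {0..t} (\<lambda>s. F s (X (Suc k) s)) - integral {0..t} (\<lambda>s. F s (X k s))"
            using fun_cong[OF XS[of "Suc k"], of t] fun_cong[OF XS[of k], of t] by simp
          then show ?thesis by (simp add: integral_diff[OF Fint Fint])
        qed
        also have "norm \<dots> \<le> integral {0..t} (\<lambda>s. (L * (B * L ^ k / fact (Suc k))) * s ^ Suc k)"
        proof (rule integral_norm_bound_integral)
          show "(\<lambda>s. F s (X (Suc k) s) - F s (X k s)) integrable_on {0..t}"
            by (intro integrable_diff Fint)
          show "(\<lambda>s. (L * (B * L ^ k / fact (Suc k))) * s ^ Suc k) integrable_on {0..t}"
            by (intro integrable_continuous_interval continuous_intros)
          fix s assume s: "s \<in> {0..t}"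
          have "norm (F s (X (Suc k) s) - F s (X k s)) \<le> L * norm (X (Suc k) s - X k s)"
            using lip s by auto
          also have "\<dots> \<le> L * (B * L ^ k * s ^ Suc k / fact (Suc k))"
            using Suc.IH s t L by (intro mult_left_mono) auto
          finally show "norm (F s (X (Suc k) s) - F s (X k s)) \<le> (L * (B * L ^ k / fact (Suc k))) * s ^ Suc k"
            by (simp add: field_simps)
        qed
        also have "\<dots> = (L * (B * L ^ k / fact (Suc k))) * (t ^ Suc (Suc k) / real (Suc (Suc k)))"
          using integral_unique[OF has_integral_mult_right[OF pow_integral[of t "Suc k"]]] t by simp
        also have "\<dots> = B * L ^ Suc k * t ^ Suc (Suc k) / fact (Suc (Suc k))"
          by (simp add: field_simps)
        finally show "norm (X (Suc (Suc k)) t - X (Suc k) t) \<le> B * L ^ Suc k * t ^ Suc (Suc k) / fact (Suc (Suc k))" .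
      qed
    qed
    then show ?thesis using B by (intro exI[of _ B]) auto
  qed
  define x where "x t = x0 + suminf (\<lambda>i. X (Suc i) t - X i t)" for t
  have unif: "uniform_limit {0..T} X x sequentially" if T: "T \<ge> 0" for T
  proof -
    obtain B where B: "B \<ge> 0" "\<And>k t. t \<in> {0..T} \<Longrightarrow> norm (X (Suc k) t - X k t) \<le> B * L ^ k * t ^ Suc k / fact (Suc k)"
      using est[OF T] by blast
    define M where "M k = B * L ^ k * T ^ Suc k / fact (Suc k)" for k
    have bnd: "norm (X (Suc k) t - X k t) \<le> M k" if t: "t \<in> {0..T}" for k t
    proof -
      have "t ^ Suc k \<le> T ^ Suc k" using t by (intro power_mono) auto
      then have "B * L ^ k * t ^ Suc k / fact (Suc k) \<le> B * L ^ k * T ^ Suc k / fact (Suc k)"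
        using B L by (intro divide_right_mono mult_left_mono) auto
      then show ?thesis using B(2)[OF t, of k] by (simp add: M_def)
    qed
    have sM: "summable M"
    proof (rule summable_comparison_test')
      show "summable (\<lambda>k. (B * T) * (inverse (fact k) * (L * T) ^ k))"
        by (intro summable_mult summable_exp)
      fix k :: nat
      have "M k = (B * T) * ((L * T) ^ k / fact (Suc k))" by (simp add: M_def power_mult_distrib field_simps)
      also have "\<dots> \<le> (B * T) * (inverse (fact k) * (L * T) ^ k)"
      proof (intro mult_left_mono)
        have "(L * T) ^ k / fact (Suc k) \<le> (L * T) ^ k / fact k"
          using L T by (intro divide_left_mono) (auto simp: fact_mono)
        then show "(L * T) ^ k / fact (Suc k) \<le> inverse (fact k) * (L * T) ^ k"
          by (simp add: field_simps)
      qed (use B T in auto)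
      finally show "norm (M k) \<le> (B * T) * (inverse (fact k) * (L * T) ^ k)"
        using B L T by (simp add: M_def)
    qed
    have W: "uniform_limit {0..T} (\<lambda>n t. \<Sum>i<n. X (Suc i) t - X i t) (\<lambda>t. suminf (\<lambda>i. X (Suc i) t - X i t)) sequentially"
      by (rule Weierstrass_m_test[OF bnd sM])
    have tel: "(\<Sum>i<n. X (Suc i) t - X i t) = X n t - x0" for n t
      using sum_lessThan_telescope[of "\<lambda>i. X i t" n] by (simp add: X0)
    show ?thesis
    proof (rule uniform_limitI)
      fix e :: real assume "e > 0"
      from uniform_limitD[OF W this] show "\<forall>\<^sub>F n in sequentially. \<forall>t\<in>{0..T}. dist (X n t) (x t) < e"
        by eventually_elim (simp add: tel x_def dist_norm algebra_simps)
    qed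
  qed
  have xc: "continuous_on {0..} x"
  proof (rule cont_halfline)
    fix T :: real assume "T \<ge> 0"
    show "continuous_on {0..T} x"
      by (rule uniform_limit_theorem[OF _ unif[OF \<open>T \<ge> 0\<close>]])
         (use continuous_on_subset[OF XC] in \<open>auto intro!: always_eventually\<close>)
  qed
  have x0': "x 0 = x0" by (simp add: x_def Xat0)
  have integ: "((\<lambda>s. F s (x s)) has_integral (x t - x0)) {0..t}" if t: "t \<ge> 0" for t
  proof -
    have u: "uniform_limit {0..t} X x sequentially" by (rule unif[OF t])
    have uF: "uniform_limit {0..t} (\<lambda>n s. F s (X n s)) (\<lambda>s. F s (x s)) sequentially"
    proof (rule uniform_limitI)
      fix e :: real assume e: "e > 0"
      have e': "e / (L + 1) > 0" using e L by simp
      from uniform_limitD[OF u e'] show "\<forall>\<^sub>F n in sequentially. \<forall>s\<in>{0..t}. dist (F s (X n s)) (F s (x s)) < e"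
      proof eventually_elim
        case (elim n)
        show ?case
        proof
          fix s assume s: "s \<in> {0..t}"
          have "dist (F s (X n s)) (F s (x s)) \<le> L * dist (X n s) (x s)"
            using lip[of s] s by (simp add: dist_norm)
          also have "\<dots> \<le> L * (e / (L + 1))" using elim s L by (intro mult_left_mono) (auto intro: less_imp_le)
          also have "\<dots> < e"
          proof -
            have "L * (e / (L + 1)) = e * (L / (L + 1))" by simp
            also have "\<dots> < e * 1" using e L by (intro mult_strict_left_mono) auto
            finally show ?thesis by simp
          qed
          finally show "dist (F s (X n s)) (F s (x s)) < e" .
        qed
      qed
    qed
    obtain I J where IJ: "\<And>n. ((\<lambda>s. F s (X n s)) has_integral I n) {0..t}"
      "((\<lambda>s. F s (x s)) has_integral J) {0..t}" "(I \<longlongrightarrow> J) sequentially"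
      by (rule uniform_limit_integral[OF uF]) (use continuous_on_subset[OF cont[OF XC]] in auto)
    have "(\<lambda>n. X (Suc n) t) \<longlonglongrightarrow> x0 + J"
    proof -
      have "X (Suc n) t = x0 + I n" for n using IJ(1)[of n] by (simp add: XS integral_unique)
      then show ?thesis using tendsto_add[OF tendsto_const IJ(3)] by simp
    qed
    moreover have "(\<lambda>n. X (Suc n) t) \<longlonglongrightarrow> x t"
      using tendsto_uniform_limitI[OF u, of t] t LIMSEQ_Suc by auto
    ultimately have "x t = x0 + J" using LIMSEQ_unique by blast
    then show ?thesis using IJ(2) by simp
  qed
  show ?thesis using xc x0' integ by blast
qed




lemma Linf_facts:
  assumes "Linf_pos d"
  shows "Linf_norm d \<ge> 0" "negligible {s. 0 \<le> s \<and> Linf_norm d < \<bar>d s\<bar>}"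
    "d \<in> borel_measurable (lebesgue_on {0..})"
proof -
  let ?M = "lebesgue_on {0::real..}"
  define E where "E = esssup ?M (\<lambda>t. ereal \<bar>d t\<bar>)"
  have dm: "d \<in> borel_measurable ?M" and Einf: "E < \<infinity>" using assms by (auto simp: Linf_pos_def E_def)
  have "AE x in ?M. ereal \<bar>d x\<bar> \<le> E" unfolding E_def by (rule esssup_AE)
  then have "AE x in lebesgue. x \<in> {0..} \<longrightarrow> ereal \<bar>d x\<bar> \<le> E"
    by (subst (asm) AE_restrict_space_iff) auto
  then obtain N where N: "{x \<in> space lebesgue. \<not> (x \<in> {0..} \<longrightarrow> ereal \<bar>d x\<bar> \<le> E)} \<subseteq> N"
    "emeasure lebesgue N = 0" "N \<in> sets lebesgue"
    by (rule AE_E)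
  have negN: "negligible N" using N by (simp add: negligible_iff_null_sets null_sets_def)
  define S where "S = {s::real. 0 \<le> s \<and> \<not> ereal \<bar>d s\<bar> \<le> E}"
  have negS: "negligible S" by (rule negligible_subset[OF negN]) (use N(1) in \<open>auto simp: S_def\<close>)
  obtain s0 where s0: "s0 \<in> {0..1::real}" "s0 \<notin> S"
  proof -
    have "\<not> negligible {0..1::real}" using negligible_interval(1)[of "0::real" 1] by simp
    then have "\<not> {0..1::real} \<subseteq> S" using negS negligible_subset by blast
    then show ?thesis using that by blast
  qed
  have "ereal \<bar>d s0\<bar> \<le> E" using s0 by (auto simp: S_def)
  then obtain r where r: "E = ereal r" using Einf by (cases E) auto
  have Lr: "Linf_norm d = r" by (simp add: Linf_norm_def E_def[symmetric] r)
  show "Linf_norm d \<ge> 0" using \<open>ereal \<bar>d s0\<bar> \<le> E\<close> Lr r by auto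
  have "{s. 0 \<le> s \<and> Linf_norm d < \<bar>d s\<bar>} = S" by (auto simp: S_def Lr r not_le)
  then show "negligible {s. 0 \<le> s \<and> Linf_norm d < \<bar>d s\<bar>}" using negS by simp
  show "d \<in> borel_measurable (lebesgue_on {0..})" by (rule dm)
qed

lemma clipped_integrable:
  fixes d :: "real \<Rightarrow> real" and M :: real
  assumes dm: "d \<in> borel_measurable (lebesgue_on {0..})"
  shows "(\<lambda>s. if \<bar>d s\<bar> \<le> M then d s else 0) absolutely_integrable_on {0..t}"
proof (cases "t \<ge> 0")
  case True
  have "d \<in> borel_measurable (lebesgue_on {0..t})" by (rule measurable_restrict_mono[OF dm]) auto
  then have m: "(\<lambda>s. if \<bar>d s\<bar> \<le> M then d s else 0) \<in> borel_measurable (lebesgue_on {0..t})"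
    by measurable
  have "(\<lambda>s. (if \<bar>d s\<bar> \<le> M then d s else 0) * 1) absolutely_integrable_on {0..t}"
  proof (rule absolutely_integrable_bounded_measurable_product_real[OF m])
    show "bounded ((\<lambda>s. if \<bar>d s\<bar> \<le> M then d s else 0) ` {0..t})"
      unfolding bounded_iff by (rule exI[of _ "\<bar>M\<bar>"]) auto
    show "(\<lambda>s. 1::real) absolutely_integrable_on {0..t}"
      by (intro absolutely_integrable_continuous_real continuous_intros)
  qed auto
  then show ?thesis by simp
next
  case False
  then have "{0..t} = {}" by auto
  then show ?thesis by simp
qed

lemma exit_lemma:
  fixes \<phi> :: "real \<Rightarrow> real"
  assumes cont: "continuous_on {0..} \<phi>" and start: "\<phi> 0 < R" and BR: "B < R"
    and step: "\<And>t. t \<ge> 0 \<Longrightarrow> (\<forall>s\<in>{0..t}. \<phi> s \<le> R) \<Longrightarrow> \<phi> t \<le> B"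
    and tt: "t \<ge> 0"
  shows "\<phi> t \<le> B"
proof (rule ccontr)
  assume nt: "\<not> \<phi> t \<le> B"
  have "\<exists>s\<in>{0..t}. \<phi> s > R" using step[OF tt] nt by force
  define E where "E = {s \<in> {0..t}. \<phi> s \<ge> R}"
  have Ene: "E \<noteq> {}" using \<open>\<exists>s\<in>{0..t}. \<phi> s > R\<close> by (force simp: E_def)
  have cE: "compact E"
  proof -
    have "closed E"
      unfolding E_def
      using continuous_closed_preimage[OF continuous_on_subset[OF cont, of "{0..t}"] closed_atLeastAtMost, of "{R..}"]
      by (auto simp: vimage_def Int_def)
    moreover have "bounded E" by (rule bounded_subset[of "{0..t}"]) (auto simp: E_def)
    ultimately show ?thesis by (simp add: compact_eq_bounded_closed)
  qed
  define \<tau> where "\<tau> = Inf E"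
  have bE: "bdd_below E" using bounded_imp_bdd_below[OF compact_imp_bounded[OF cE]] .
  have tE: "\<tau> \<in> E" unfolding \<tau>_def by (rule closed_contains_Inf[OF Ene bE compact_imp_closed[OF cE]])
  have tR: "\<phi> \<tau> \<ge> R" and t0: "\<tau> \<ge> 0" "\<tau> \<le> t" using tE by (auto simp: E_def)
  have below: "\<phi> s < R" if "0 \<le> s" "s < \<tau>" for s
  proof (rule ccontr)
    assume "\<not> \<phi> s < R"
    then have "s \<in> E" using that t0 by (auto simp: E_def)
    then have "\<tau> \<le> s" unfolding \<tau>_def by (rule cInf_lower[OF _ bE])
    then show False using that by simp
  qed
  have bB: "\<phi> s \<le> B" if "0 \<le> s" "s < \<tau>" for s
    using step[of s] below that by force
  have tpos: "\<tau> > 0" using tR start t0 by (cases "\<tau> = 0") auto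
  obtain \<delta> where d: "\<delta> > 0" "\<And>s. s \<in> {0..} \<Longrightarrow> dist s \<tau> < \<delta> \<Longrightarrow> dist (\<phi> s) (\<phi> \<tau>) < R - B"
  proof -
    have "\<forall>e>0. \<exists>d>0. \<forall>x'\<in>{0..}. dist x' \<tau> < d \<longrightarrow> dist (\<phi> x') (\<phi> \<tau>) < e"
      using cont t0 unfolding continuous_on_iff by simp
    then have "\<exists>d>0. \<forall>x'\<in>{0..}. dist x' \<tau> < d \<longrightarrow> dist (\<phi> x') (\<phi> \<tau>) < R - B"
      using BR by simp
    then show ?thesis using that by blast
  qed
  define s where "s = max 0 (\<tau> - \<delta> / 2)"
  have s: "0 \<le> s" "s < \<tau>" "dist s \<tau> < \<delta>" using d tpos by (auto simp: s_def dist_real_def)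
  have "\<phi> \<tau> < \<phi> s + (R - B)" using d(2)[of s] s by (auto simp: dist_real_def)
  then show False using bB[OF s(1,2)] tR by simp
qed

lemma sqrt_bound:
  fixes \<Gamma> m c M \<sigma> \<theta> Y Z r0 T :: real
  assumes "\<Gamma> > 0" "m > 0" "c > 0" "M \<ge> 0" "\<sigma> > 0" "r0 \<ge> 0"
    and H: "Y\<^sup>2 + Z\<^sup>2 \<le> max \<Gamma> (1 / \<Gamma>) * exp (- m * T) * r0
           + max \<Gamma> 1 * M\<^sup>2 / (c * m) + max \<Gamma> 1 * \<sigma> * \<theta>\<^sup>2 / (\<Gamma> * m)"
  shows "sqrt (Y\<^sup>2 + Z\<^sup>2) \<le> exp (- m * T / 2) * sqrt (max \<Gamma> (1 / \<Gamma>)) * sqrt r0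
                  + sqrt (max \<Gamma> 1 / (c * m)) * M + \<bar>\<theta>\<bar> * sqrt (\<sigma> / (min \<Gamma> 1 * m))"
proof -
  define A where "A = exp (- m * T / 2) * sqrt (max \<Gamma> (1 / \<Gamma>)) * sqrt r0"
  define B where "B = sqrt (max \<Gamma> 1 / (c * m)) * M"
  define C where "C = \<bar>\<theta>\<bar> * sqrt (\<sigma> / (min \<Gamma> 1 * m))"
  have mg: "max \<Gamma> (1 / \<Gamma>) \<ge> 0" "max \<Gamma> 1 \<ge> 0" "min \<Gamma> 1 > 0" using assms by auto
  have A0: "A \<ge> 0" and B0: "B \<ge> 0" and C0: "C \<ge> 0" using assms mg by (auto simp: A_def B_def C_def)
  have A2: "A\<^sup>2 = max \<Gamma> (1 / \<Gamma>) * exp (- m * T) * r0"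
  proof -
    have "(exp (- m * T / 2))\<^sup>2 = exp (- m * T)" by (simp add: power2_eq_square exp_add[symmetric])
    then show ?thesis using mg assms by (simp add: A_def power_mult_distrib)
  qed
  have B2: "B\<^sup>2 = max \<Gamma> 1 * M\<^sup>2 / (c * m)" using mg assms by (simp add: B_def power_mult_distrib)
  have C2: "C\<^sup>2 = max \<Gamma> 1 * \<sigma> * \<theta>\<^sup>2 / (\<Gamma> * m)"
  proof -
    have "max \<Gamma> 1 / \<Gamma> = 1 / min \<Gamma> 1" using assms by (auto simp: max_def min_def)
    then have "max \<Gamma> 1 * \<sigma> * \<theta>\<^sup>2 / (\<Gamma> * m) = \<theta>\<^sup>2 * (\<sigma> / (min \<Gamma> 1 * m))"
      using assms by (simp add: field_simps)
    then show ?thesis using mg assms by (simp add: C_def power_mult_distrib)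
  qed
  have "sqrt (Y\<^sup>2 + Z\<^sup>2) \<le> sqrt (A\<^sup>2 + B\<^sup>2 + C\<^sup>2)" using H A2 B2 C2 by simp
  also have "\<dots> \<le> sqrt ((A + B + C)\<^sup>2)"
    using A0 B0 C0 by (intro real_sqrt_le_mono) (simp add: power2_eq_square algebra_simps)
  also have "\<dots> = A + B + C" using A0 B0 C0 by simp
  finally show ?thesis by (simp add: A_def B_def C_def)
qed




definition clp :: "real \<Rightarrow> real \<Rightarrow> real" where "clp R v = max (- R) (min R v)"

lemma clp_bound: "R \<ge> 0 \<Longrightarrow> \<bar>clp R v\<bar> \<le> R" by (auto simp: clp_def)
lemma clp_lip: "\<bar>clp R v - clp R w\<bar> \<le> \<bar>v - w\<bar>" by (auto simp: clp_def)
lemma clp_id: "\<bar>v\<bar> \<le> R \<Longrightarrow> clp R v = v" by (auto simp: clp_def)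
lemma clp_cont [continuous_intros]: "continuous_on S f \<Longrightarrow> continuous_on S (\<lambda>x. clp R (f x))"
  unfolding clp_def by (intro continuous_intros)

definition FF :: "real \<Rightarrow> real \<Rightarrow> real \<Rightarrow> real \<Rightarrow> real \<Rightarrow> real \<Rightarrow> (real \<Rightarrow> real) \<Rightarrow> real \<Rightarrow> real \<times> real \<Rightarrow> real \<times> real"
  where "FF c \<Gamma> \<sigma> q \<theta> R D s p =
    (- c * clp R (fst p + D s) - clp R (snd p) * clp R (fst p + D s) - q * clp R (fst p + D s) ^ 3,
     \<Gamma> * (clp R (fst p + D s))\<^sup>2 - \<sigma> * clp R (snd p) - \<sigma> * \<theta>)"

lemma cube_diff_bound:
  fixes Y Y' R :: real
  assumes "\<bar>Y\<bar> \<le> R" "\<bar>Y'\<bar> \<le> R"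
  shows "\<bar>Y ^ 3 - Y' ^ 3\<bar> \<le> 3 * R\<^sup>2 * \<bar>Y - Y'\<bar>"
proof -
  have e: "Y ^ 3 - Y' ^ 3 = (Y - Y') * (Y\<^sup>2 + Y * Y' + Y'\<^sup>2)" by (simp add: power2_eq_square power3_eq_cube algebra_simps)
  have R0: "R \<ge> 0" using assms by simp
  have "\<bar>Y\<^sup>2 + Y * Y' + Y'\<^sup>2\<bar> \<le> \<bar>Y\<^sup>2\<bar> + \<bar>Y * Y'\<bar> + \<bar>Y'\<^sup>2\<bar>"
    using abs_triangle_ineq[of "Y\<^sup>2 + Y * Y'" "Y'\<^sup>2"] abs_triangle_ineq[of "Y\<^sup>2" "Y * Y'"] by linarith
  also have "\<dots> = \<bar>Y\<bar>\<^sup>2 + \<bar>Y\<bar> * \<bar>Y'\<bar> + \<bar>Y'\<bar>\<^sup>2" by (simp add: abs_mult)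
  also have "\<dots> \<le> R\<^sup>2 + R * R + R\<^sup>2"
    using assms by (intro add_mono power_mono mult_mono) auto
  finally have "\<bar>Y\<^sup>2 + Y * Y' + Y'\<^sup>2\<bar> \<le> 3 * R\<^sup>2" by (simp add: power2_eq_square)
  from mult_left_mono[OF this abs_ge_zero[of "Y - Y'"]] show ?thesis unfolding e abs_mult by (simp add: mult_ac)
qed

lemma FF_lip:
  fixes c \<Gamma> \<sigma> q \<theta> R s :: real and D :: "real \<Rightarrow> real" and p p' :: "real \<times> real"
  assumes "c > 0" "\<Gamma> > 0" "\<sigma> > 0" "q \<ge> 0" "R \<ge> 0"
  shows "norm (FF c \<Gamma> \<sigma> q \<theta> R D s p - FF c \<Gamma> \<sigma> q \<theta> R D s p')
     \<le> (2 * (c + 2 * R + 3 * q * R\<^sup>2 + 2 * \<Gamma> * R + \<sigma>)) * norm (p - p')"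
proof -
  define Y where "Y = clp R (fst p + D s)"
  define Y' where "Y' = clp R (fst p' + D s)"
  define Z where "Z = clp R (snd p)"
  define Z' where "Z' = clp R (snd p')"
  define n where "n = norm (p - p')"
  have bY: "\<bar>Y\<bar> \<le> R" "\<bar>Y'\<bar> \<le> R" "\<bar>Z\<bar> \<le> R" "\<bar>Z'\<bar> \<le> R"
    using clp_bound assms by (auto simp: Y_def Y'_def Z_def Z'_def)
  have pe: "p - p' = (fst p - fst p', snd p - snd p')" by (simp add: prod_eq_iff)
  have a: "\<bar>Y - Y'\<bar> \<le> n"
  proof -
    have "\<bar>Y - Y'\<bar> \<le> \<bar>fst p - fst p'\<bar>" using clp_lip[of R "fst p + D s" "fst p' + D s"] by (simp add: Y_def Y'_def)
    also have "\<dots> \<le> n" using norm_fst_le[of "fst p - fst p'" "snd p - snd p'"] by (simp add: n_def pe)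
    finally show ?thesis .
  qed
  have b: "\<bar>Z - Z'\<bar> \<le> n"
  proof -
    have "\<bar>Z - Z'\<bar> \<le> \<bar>snd p - snd p'\<bar>" using clp_lip[of R "snd p" "snd p'"] by (simp add: Z_def Z'_def)
    also have "\<dots> \<le> n" using norm_snd_le[of "snd p - snd p'" "fst p - fst p'"] by (simp add: n_def pe)
    finally show ?thesis .
  qed
  have n0: "n \<ge> 0" by (simp add: n_def)
  have d1: "\<bar>(- c * Y - Z * Y - q * Y ^ 3) - (- c * Y' - Z' * Y' - q * Y' ^ 3)\<bar>
      \<le> c * n + (R * n + R * n) + q * (3 * R\<^sup>2 * n)"
  proof -
    have e: "(- c * Y - Z * Y - q * Y ^ 3) - (- c * Y' - Z' * Y' - q * Y' ^ 3)
       = - (c * (Y - Y')) - (Z' * (Y - Y') + Y * (Z - Z')) - q * (Y ^ 3 - Y' ^ 3)" by (simp add: algebra_simps)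
    have t1: "\<bar>c * (Y - Y')\<bar> \<le> c * n" using a assms by (simp add: abs_mult mult_left_mono)
    have t2: "\<bar>Z' * (Y - Y')\<bar> \<le> R * n" using a bY n0 by (simp add: abs_mult mult_mono)
    have t3: "\<bar>Y * (Z - Z')\<bar> \<le> R * n" using b bY n0 by (simp add: abs_mult mult_mono)
    have t4: "\<bar>q * (Y ^ 3 - Y' ^ 3)\<bar> \<le> q * (3 * R\<^sup>2 * n)"
    proof -
      have "\<bar>Y ^ 3 - Y' ^ 3\<bar> \<le> 3 * R\<^sup>2 * n"
        using cube_diff_bound[OF bY(1,2)] a assms by (meson mult_left_mono order_trans zero_le_power2 mult_nonneg_nonneg zero_le_numeral)
      then show ?thesis using assms by (simp add: abs_mult mult_left_mono)
    qed
    show ?thesis unfolding e using t1 t2 t3 t4 abs_triangle_ineq abs_minus_cancel by (smt (verit))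
  qed
  have d2: "\<bar>(\<Gamma> * Y\<^sup>2 - \<sigma> * Z - \<sigma> * \<theta>) - (\<Gamma> * Y'\<^sup>2 - \<sigma> * Z' - \<sigma> * \<theta>)\<bar> \<le> \<Gamma> * (2 * R * n) + \<sigma> * n"
  proof -
    have e: "(\<Gamma> * Y\<^sup>2 - \<sigma> * Z - \<sigma> * \<theta>) - (\<Gamma> * Y'\<^sup>2 - \<sigma> * Z' - \<sigma> * \<theta>) = \<Gamma> * ((Y + Y') * (Y - Y')) - \<sigma> * (Z - Z')"
      by (simp add: algebra_simps power2_eq_square)
    have "\<bar>Y + Y'\<bar> \<le> 2 * R" using bY by simp
    then have "\<bar>(Y + Y') * (Y - Y')\<bar> \<le> 2 * R * n" using a by (simp add: abs_mult mult_mono)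
    then have t1: "\<bar>\<Gamma> * ((Y + Y') * (Y - Y'))\<bar> \<le> \<Gamma> * (2 * R * n)" using assms by (simp add: abs_mult mult_left_mono)
    have t2: "\<bar>\<sigma> * (Z - Z')\<bar> \<le> \<sigma> * n" using b assms by (simp add: abs_mult mult_left_mono)
    show ?thesis unfolding e using t1 t2 by (smt (verit))
  qed
  have "norm (FF c \<Gamma> \<sigma> q \<theta> R D s p - FF c \<Gamma> \<sigma> q \<theta> R D s p')
      \<le> \<bar>(- c * Y - Z * Y - q * Y ^ 3) - (- c * Y' - Z' * Y' - q * Y' ^ 3)\<bar>
        + \<bar>(\<Gamma> * Y\<^sup>2 - \<sigma> * Z - \<sigma> * \<theta>) - (\<Gamma> * Y'\<^sup>2 - \<sigma> * Z' - \<sigma> * \<theta>)\<bar>"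
    using norm_Pair_le[of "(- c * Y - Z * Y - q * Y ^ 3) - (- c * Y' - Z' * Y' - q * Y' ^ 3)"
        "(\<Gamma> * Y\<^sup>2 - \<sigma> * Z - \<sigma> * \<theta>) - (\<Gamma> * Y'\<^sup>2 - \<sigma> * Z' - \<sigma> * \<theta>)"]
    by (simp add: FF_def Y_def Y'_def Z_def Z'_def)
  also have "\<dots> \<le> (c * n + (R * n + R * n) + q * (3 * R\<^sup>2 * n)) + (\<Gamma> * (2 * R * n) + \<sigma> * n)"
    using d1 d2 by simp
  also have "\<dots> = (c + 2 * R + 3 * q * R\<^sup>2 + 2 * \<Gamma> * R + \<sigma>) * n" by (simp add: algebra_simps)
  also have "\<dots> \<le> (2 * (c + 2 * R + 3 * q * R\<^sup>2 + 2 * \<Gamma> * R + \<sigma>)) * n"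
    using assms n0 by (intro mult_right_mono) auto
  finally show ?thesis by (simp add: n_def)
qed




theorem mainTheorem16:
  fixes c \<Gamma> \<sigma> q \<theta> :: real
  assumes "c > 0" "\<Gamma> > 0" "\<sigma> > 0" "q \<ge> 0"
  shows "(\<forall>y0 z0 d. Linf_pos d \<longrightarrow>
            (\<exists>y z. y 0 = y0 \<and> z 0 = z0 \<and> is_solution c \<Gamma> \<sigma> q \<theta> d y z) \<and>
            (\<forall>y z. y 0 = y0 \<and> z 0 = z0 \<and> is_solution c \<Gamma> \<sigma> q \<theta> d y z \<longrightarrow>
               (\<forall>t\<ge>0. sqrt ((y t)\<^sup>2 + (z t)\<^sup>2) \<le>
                  exp (- min c \<sigma> * t / 2) * sqrt (max \<Gamma> (1 / \<Gamma>)) * sqrt (y0\<^sup>2 + z0\<^sup>2)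
                  + sqrt (max \<Gamma> 1 / (c * min c \<sigma>)) * Linf_norm d
                  + \<bar>\<theta>\<bar> * sqrt (\<sigma> / (min \<Gamma> 1 * min c \<sigma>)))))
         \<and> (\<theta> > c \<longrightarrow>
            (\<forall>ys \<in> {sqrt (\<sigma> * (\<theta> - c) / (\<Gamma> + \<sigma> * q)), - sqrt (\<sigma> * (\<theta> - c) / (\<Gamma> + \<sigma> * q))}.
               let zs = - (\<Gamma> * c + \<theta> * \<sigma> * q) / (\<Gamma> + \<sigma> * q) in
               fy c q ys zs 0 = 0 \<and> fz \<Gamma> \<sigma> \<theta> ys zs = 0))"
proof -
  note pos = assms
  define m where "m = min c \<sigma>"
  have m0: "m > 0" using pos by (simp add: m_def)
  have A: "(\<exists>y z. y 0 = y0 \<and> z 0 = z0 \<and> is_solution c \<Gamma> \<sigma> q \<theta> d y z) \<and>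
            (\<forall>y z. y 0 = y0 \<and> z 0 = z0 \<and> is_solution c \<Gamma> \<sigma> q \<theta> d y z \<longrightarrow>
               (\<forall>t\<ge>0. sqrt ((y t)\<^sup>2 + (z t)\<^sup>2) \<le>
                  exp (- min c \<sigma> * t / 2) * sqrt (max \<Gamma> (1 / \<Gamma>)) * sqrt (y0\<^sup>2 + z0\<^sup>2)
                  + sqrt (max \<Gamma> 1 / (c * min c \<sigma>)) * Linf_norm d
                  + \<bar>\<theta>\<bar> * sqrt (\<sigma> / (min \<Gamma> 1 * min c \<sigma>))))"
    if Ld: "Linf_pos d" for y0 z0 d
  proof (rule conjI)
  define M where "M = Linf_norm d"
  have M0: "M \<ge> 0" using Linf_facts(1)[OF Ld] by (simp add: M_def)
  define N where "N = {s. 0 \<le> s \<and> M < \<bar>d s\<bar>}"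
  have negN: "negligible N" using Linf_facts(2)[OF Ld] by (simp add: N_def M_def)
  have dm: "d \<in> borel_measurable (lebesgue_on {0..})" by (rule Linf_facts(3)[OF Ld])
  define d0 where "d0 = (\<lambda>s. if \<bar>d s\<bar> \<le> M then d s else 0)"
  have d0M: "\<And>s. s \<ge> 0 \<Longrightarrow> \<bar>d0 s\<bar> \<le> M" using M0 by (auto simp: d0_def)
  have d0i: "\<And>t. d0 absolutely_integrable_on {0..t}" unfolding d0_def by (rule clipped_integrable[OF dm])
  have d0eq: "\<And>s t. s \<in> {0..t} - N \<Longrightarrow> d0 s = d s" by (auto simp: d0_def N_def)
  have spike_y: "((\<lambda>s. fy c q (y s) (z s) (d s)) has_integral X) {0..t} \<longleftrightarrow>
                 ((\<lambda>s. fy c q (y s) (z s) (d0 s)) has_integral X) {0..t}" for y z X t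
  proof
    assume "((\<lambda>s. fy c q (y s) (z s) (d s)) has_integral X) {0..t}"
    then show "((\<lambda>s. fy c q (y s) (z s) (d0 s)) has_integral X) {0..t}"
      by (rule has_integral_spike[OF negN, rotated]) (auto simp: d0_def N_def)
  next
    assume "((\<lambda>s. fy c q (y s) (z s) (d0 s)) has_integral X) {0..t}"
    then show "((\<lambda>s. fy c q (y s) (z s) (d s)) has_integral X) {0..t}"
      by (rule has_integral_spike[OF negN, rotated]) (auto simp: d0_def N_def)
  qed
  define Bd where "Bd = sqrt (max \<Gamma> (1 / \<Gamma>)) * sqrt (y0\<^sup>2 + z0\<^sup>2) + sqrt (max \<Gamma> 1 / (c * m)) * M
                 + \<bar>\<theta>\<bar> * sqrt (\<sigma> / (min \<Gamma> 1 * m))"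
  have bnd0: "sqrt ((y t)\<^sup>2 + (z t)\<^sup>2) \<le> exp (- m * t / 2) * sqrt (max \<Gamma> (1 / \<Gamma>)) * sqrt (y0\<^sup>2 + z0\<^sup>2)
                  + sqrt (max \<Gamma> 1 / (c * m)) * M + \<bar>\<theta>\<bar> * sqrt (\<sigma> / (min \<Gamma> 1 * m))"
    if y0: "y 0 = y0" and z0: "z 0 = z0" and t: "t \<ge> 0"
      and eqs: "\<And>t'. t' \<in> {0..t} \<Longrightarrow> ((\<lambda>s. fy c q (y s) (z s) (d0 s)) has_integral (y t' - y 0)) {0..t'}
                 \<and> ((\<lambda>s. fz \<Gamma> \<sigma> \<theta> (y s) (z s)) has_integral (z t' - z 0)) {0..t'}"
    for y z t
  proof -
    have BL: "(y t)\<^sup>2 + (z t)\<^sup>2 \<le> max \<Gamma> (1 / \<Gamma>) * exp (- m * t) * ((y 0)\<^sup>2 + (z 0)\<^sup>2)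
           + max \<Gamma> 1 * M\<^sup>2 / (c * m) + max \<Gamma> 1 * \<sigma> * \<theta>\<^sup>2 / (\<Gamma> * m)"
      unfolding m_def
      by (rule bound_lemma[OF pos t d0M d0i]) (use eqs in auto)
    show ?thesis
      by (rule sqrt_bound[OF pos(2) m0 pos(1) M0 pos(3) _ BL[unfolded y0 z0]]) simp
  qed
  have Bd0: "Bd \<ge> 0" using M0 pos m0 by (simp add: Bd_def)
  have bndB: "sqrt ((y t)\<^sup>2 + (z t)\<^sup>2) \<le> Bd"
    if y0: "y 0 = y0" and z0: "z 0 = z0" and t: "t \<ge> 0"
      and eqs: "\<And>t'. t' \<in> {0..t} \<Longrightarrow> ((\<lambda>s. fy c q (y s) (z s) (d0 s)) has_integral (y t' - y 0)) {0..t'}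
                 \<and> ((\<lambda>s. fz \<Gamma> \<sigma> \<theta> (y s) (z s)) has_integral (z t' - z 0)) {0..t'}"
    for y z t
  proof -
    have mx: "0 \<le> max \<Gamma> (1 / \<Gamma>)" using pos by (simp add: le_max_iff_disj)
    have "exp (- m * t / 2) \<le> 1" using m0 t by simp
    then have "exp (- m * t / 2) * (sqrt (max \<Gamma> (1 / \<Gamma>)) * sqrt (y0\<^sup>2 + z0\<^sup>2)) \<le> 1 * (sqrt (max \<Gamma> (1 / \<Gamma>)) * sqrt (y0\<^sup>2 + z0\<^sup>2))"
      using mx by (intro mult_right_mono) auto
    then show ?thesis using bnd0[OF y0 z0 t eqs] unfolding Bd_def by (simp add: mult.assoc)
  qed
  show "\<exists>y z. y 0 = y0 \<and> z 0 = z0 \<and> is_solution c \<Gamma> \<sigma> q \<theta> d y z"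
  proof -
    define D where "D = (\<lambda>t. integral {0..t} d0)"
    have DI: "(d0 has_integral D t) {0..t}" for t
      using d0i[of t] by (simp add: D_def absolutely_integrable_on_def integrable_integral)
    have D0: "D 0 = 0" by (simp add: D_def)
    have Dc: "continuous_on {0..} D"
      unfolding D_def
      by (rule cont_halfline, rule indefinite_integral_continuous_1) (use d0i in \<open>simp add: absolutely_integrable_on_def\<close>)
    define R where "R = Bd + 1"
    have R0: "R \<ge> 0" using Bd0 by (simp add: R_def)
    define F where "F = FF c \<Gamma> \<sigma> q \<theta> R D"
    define L where "L = 2 * (c + 2 * R + 3 * q * R\<^sup>2 + 2 * \<Gamma> * R + \<sigma>)"
    have L0: "L \<ge> 0" using pos R0 by (simp add: L_def)
    have Fc: "continuous_on {0..} (\<lambda>s. F s (x s))" if "continuous_on {0..} x" for x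
      unfolding F_def FF_def by (intro continuous_intros that Dc)
    have Fl: "norm (F s p - F s p') \<le> L * norm (p - p')" for s p p'
      unfolding F_def L_def by (rule FF_lip[OF pos R0])
    obtain x where xc: "continuous_on {0..} x" and x0: "x 0 = (y0, z0)"
      and xi: "\<And>t. t \<ge> 0 \<Longrightarrow> ((\<lambda>s. F s (x s)) has_integral (x t - (y0, z0))) {0..t}"
      using picard_global[OF Fc Fl L0, of "(y0, z0)"] by blast
    define u where "u = (\<lambda>s. fst (x s))"
    define z where "z = (\<lambda>s. snd (x s))"
    define y where "y = (\<lambda>s. u s + D s)"
    have uc: "continuous_on {0..} u" unfolding u_def by (intro continuous_intros xc)
    have zc: "continuous_on {0..} z" unfolding z_def by (intro continuous_intros xc)
    have yc: "continuous_on {0..} y" unfolding y_def by (intro continuous_intros uc Dc)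
    have y0': "y 0 = y0" using x0 D0 by (simp add: y_def u_def)
    have z0': "z 0 = z0" using x0 by (simp add: z_def)
    have ui: "((\<lambda>s. fst (F s (x s))) has_integral (u t - y0)) {0..t}" if "t \<ge> 0" for t
      using has_integral_linear[OF xi[OF that] bounded_linear_fst] by (simp add: o_def u_def)
    have zi: "((\<lambda>s. snd (F s (x s))) has_integral (z t - z0)) {0..t}" if "t \<ge> 0" for t
      using has_integral_linear[OF xi[OF that] bounded_linear_snd] by (simp add: o_def z_def)
    define \<phi> where "\<phi> = (\<lambda>s. max \<bar>y s\<bar> \<bar>z s\<bar>)"
    have \<phi>c: "continuous_on {0..} \<phi>" unfolding \<phi>_def by (intro continuous_intros yc zc)
    have abs_le: "max \<bar>a\<bar> \<bar>b\<bar> \<le> sqrt (a\<^sup>2 + b\<^sup>2)" for a b :: real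
    proof -
      have "\<bar>a\<bar> \<le> sqrt (a\<^sup>2 + b\<^sup>2)" using real_sqrt_le_mono[of "a\<^sup>2" "a\<^sup>2 + b\<^sup>2"] by simp
      moreover have "\<bar>b\<bar> \<le> sqrt (a\<^sup>2 + b\<^sup>2)" using real_sqrt_le_mono[of "b\<^sup>2" "a\<^sup>2 + b\<^sup>2"] by simp
      ultimately show ?thesis by simp
    qed
    have eqs: "((\<lambda>s. fy c q (y s) (z s) (d0 s)) has_integral (y t' - y 0)) {0..t'}
                 \<and> ((\<lambda>s. fz \<Gamma> \<sigma> \<theta> (y s) (z s)) has_integral (z t' - z 0)) {0..t'}"
      if t: "t \<ge> 0" and small: "\<forall>s\<in>{0..t}. \<phi> s \<le> R" and t': "t' \<in> {0..t}" for t t'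
    proof -
      have t'0: "t' \<ge> 0" using t' by simp
      have inact: "clp R (y s) = y s" "clp R (z s) = z s" if "s \<in> {0..t'}" for s
        using small that t' by (auto simp: \<phi>_def intro!: clp_id)
      have Fx1: "fst (F s (x s)) + d0 s = fy c q (y s) (z s) (d0 s)" if "s \<in> {0..t'}" for s
        using inact[OF that] by (simp add: F_def FF_def fy_def y_def u_def z_def)
      have Fx2: "snd (F s (x s)) = fz \<Gamma> \<sigma> \<theta> (y s) (z s)" if "s \<in> {0..t'}" for s
        using inact[OF that] by (simp add: F_def FF_def fz_def y_def u_def z_def)
      have "((\<lambda>s. fst (F s (x s)) + d0 s) has_integral (u t' - y0 + D t')) {0..t'}"
        by (intro has_integral_add ui t'0 DI)
      then have "((\<lambda>s. fy c q (y s) (z s) (d0 s)) has_integral (u t' - y0 + D t')) {0..t'}"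
        by (rule has_integral_eq[rotated]) (use Fx1 in auto)
      moreover have "y t' - y 0 = u t' - y0 + D t'" using y0' by (simp add: y_def)
      ultimately have "((\<lambda>s. fy c q (y s) (z s) (d0 s)) has_integral (y t' - y 0)) {0..t'}" by simp
      moreover have "((\<lambda>s. fz \<Gamma> \<sigma> \<theta> (y s) (z s)) has_integral (z t' - z 0)) {0..t'}"
        using has_integral_eq[OF _ zi[OF t'0], of "\<lambda>s. fz \<Gamma> \<sigma> \<theta> (y s) (z s)"] Fx2 z0' by auto
      ultimately show ?thesis ..
    qed
    have allB: "\<phi> t \<le> Bd" if "t \<ge> 0" for t
    proof (rule exit_lemma[OF \<phi>c _ _ _ that, of R])
      show "\<phi> 0 < R"
      proof -
        have "\<phi> 0 \<le> sqrt (y0\<^sup>2 + z0\<^sup>2)" using abs_le y0' z0' by (simp add: \<phi>_def)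
        also have "\<dots> \<le> sqrt (max \<Gamma> (1 / \<Gamma>)) * sqrt (y0\<^sup>2 + z0\<^sup>2)"
        proof -
          have "1 \<le> max \<Gamma> (1 / \<Gamma>)" using pos by (cases "\<Gamma> \<ge> 1") (simp_all add: le_max_iff_disj le_divide_eq)
          then have "1 \<le> sqrt (max \<Gamma> (1 / \<Gamma>))" by simp
          moreover have "0 \<le> sqrt (y0\<^sup>2 + z0\<^sup>2)" by simp
          ultimately show ?thesis using mult_right_mono[of 1 "sqrt (max \<Gamma> (1 / \<Gamma>))" "sqrt (y0\<^sup>2 + z0\<^sup>2)"] by simp
        qed
        also have "\<dots> \<le> Bd" using M0 m0 pos by (simp add: Bd_def)
        finally show ?thesis by (simp add: R_def)
      qed
      show "Bd < R" by (simp add: R_def)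
      fix t assume t: "t \<ge> 0" and small: "\<forall>s\<in>{0..t}. \<phi> s \<le> R"
      have "sqrt ((y t)\<^sup>2 + (z t)\<^sup>2) \<le> Bd"
        by (rule bndB[of y z t, OF y0' z0' t]) (rule eqs[OF t small], simp)
      then show "\<phi> t \<le> Bd" using abs_le[of "y t" "z t"] unfolding \<phi>_def by linarith
    qed
    have sol: "is_solution c \<Gamma> \<sigma> q \<theta> d y z"
      unfolding is_solution_def
    proof (intro conjI yc zc allI impI)
      fix t :: real assume t: "t \<ge> 0"
      have small: "\<forall>s\<in>{0..t}. \<phi> s \<le> R" using allB by (auto simp: R_def) (smt (verit) allB)
      have e: "((\<lambda>s. fy c q (y s) (z s) (d0 s)) has_integral (y t - y 0)) {0..t}
                 \<and> ((\<lambda>s. fz \<Gamma> \<sigma> \<theta> (y s) (z s)) has_integral (z t - z 0)) {0..t}"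
        by (rule eqs[OF t small]) (use t in simp)
      then show "((\<lambda>s. fy c q (y s) (z s) (d s)) has_integral (y t - y 0)) {0..t}"
        using spike_y by blast
      show "((\<lambda>s. fz \<Gamma> \<sigma> \<theta> (y s) (z s)) has_integral (z t - z 0)) {0..t}" using e by blast
    qed
    show ?thesis using y0' z0' sol by blast
  qed
  show "\<forall>y z. y 0 = y0 \<and> z 0 = z0 \<and> is_solution c \<Gamma> \<sigma> q \<theta> d y z \<longrightarrow>
               (\<forall>t\<ge>0. sqrt ((y t)\<^sup>2 + (z t)\<^sup>2) \<le>
                  exp (- min c \<sigma> * t / 2) * sqrt (max \<Gamma> (1 / \<Gamma>)) * sqrt (y0\<^sup>2 + z0\<^sup>2)
                  + sqrt (max \<Gamma> 1 / (c * min c \<sigma>)) * Linf_norm d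
                  + \<bar>\<theta>\<bar> * sqrt (\<sigma> / (min \<Gamma> 1 * min c \<sigma>)))"
  proof (intro allI impI)
    fix y z :: "real \<Rightarrow> real" and t :: real
    assume H: "y 0 = y0 \<and> z 0 = z0 \<and> is_solution c \<Gamma> \<sigma> q \<theta> d y z" and t: "t \<ge> 0"
    have eqs: "((\<lambda>s. fy c q (y s) (z s) (d0 s)) has_integral (y t' - y 0)) {0..t'}
                 \<and> ((\<lambda>s. fz \<Gamma> \<sigma> \<theta> (y s) (z s)) has_integral (z t' - z 0)) {0..t'}" if "t' \<in> {0..t}" for t'
      using H spike_y that unfolding is_solution_def by auto
    show "sqrt ((y t)\<^sup>2 + (z t)\<^sup>2) \<le>
                  exp (- min c \<sigma> * t / 2) * sqrt (max \<Gamma> (1 / \<Gamma>)) * sqrt (y0\<^sup>2 + z0\<^sup>2)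
                  + sqrt (max \<Gamma> 1 / (c * min c \<sigma>)) * Linf_norm d
                  + \<bar>\<theta>\<bar> * sqrt (\<sigma> / (min \<Gamma> 1 * min c \<sigma>))"
      using bnd0[of y z t] eqs H t by (simp add: m_def M_def)
  qed
  qed
  have B: "\<forall>ys \<in> {sqrt (\<sigma> * (\<theta> - c) / (\<Gamma> + \<sigma> * q)), - sqrt (\<sigma> * (\<theta> - c) / (\<Gamma> + \<sigma> * q))}.
               let zs = - (\<Gamma> * c + \<theta> * \<sigma> * q) / (\<Gamma> + \<sigma> * q) in
               fy c q ys zs 0 = 0 \<and> fz \<Gamma> \<sigma> \<theta> ys zs = 0" if th: "\<theta> > c"
  proof
    fix ys assume ys: "ys \<in> {sqrt (\<sigma> * (\<theta> - c) / (\<Gamma> + \<sigma> * q)), - sqrt (\<sigma> * (\<theta> - c) / (\<Gamma> + \<sigma> * q))}"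
    define A where "A = \<Gamma> + \<sigma> * q"
    define S where "S = \<sigma> * (\<theta> - c) / A"
    define zs where "zs = - (\<Gamma> * c + \<theta> * \<sigma> * q) / A"
    have A0: "A > 0" using pos by (simp add: A_def add_pos_nonneg)
    have S0: "S \<ge> 0" using pos th A0 by (simp add: S_def)
    have ys2: "ys\<^sup>2 = S" using ys S0 by (auto simp: S_def A_def)
    have AS: "A * S = \<sigma> * (\<theta> - c)" using A0 by (simp add: S_def)
    have Az: "A * zs = - (\<Gamma> * c + \<theta> * \<sigma> * q)" using A0 by (simp add: zs_def)
    have "A * (- c - zs - q * S) = - c * A - A * zs - q * (A * S)" by (simp add: algebra_simps)
    also have "\<dots> = - c * A + (\<Gamma> * c + \<theta> * \<sigma> * q) - q * (\<sigma> * (\<theta> - c))" by (simp only: AS Az)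
    also have "\<dots> = 0" by (simp add: A_def algebra_simps)
    finally have k1: "- c - zs - q * S = 0" using A0 by simp
    have "A * (\<Gamma> * S - \<sigma> * zs - \<sigma> * \<theta>) = \<Gamma> * (A * S) - \<sigma> * (A * zs) - \<sigma> * \<theta> * A" by (simp add: algebra_simps)
    also have "\<dots> = \<Gamma> * (\<sigma> * (\<theta> - c)) + \<sigma> * (\<Gamma> * c + \<theta> * \<sigma> * q) - \<sigma> * \<theta> * A" by (simp only: AS Az)
    also have "\<dots> = 0" by (simp add: A_def algebra_simps)
    finally have k2: "\<Gamma> * S - \<sigma> * zs - \<sigma> * \<theta> = 0" using A0 by simp
    have "fy c q ys zs 0 = ys * (- c - zs - q * ys\<^sup>2)"
      by (simp add: fy_def power2_eq_square power3_eq_cube algebra_simps)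
    also have "\<dots> = 0" using k1 ys2 by simp
    finally have f1: "fy c q ys zs 0 = 0" .
    have f2: "fz \<Gamma> \<sigma> \<theta> ys zs = 0" using k2 ys2 by (simp add: fz_def)
    show "let zs = - (\<Gamma> * c + \<theta> * \<sigma> * q) / (\<Gamma> + \<sigma> * q) in fy c q ys zs 0 = 0 \<and> fz \<Gamma> \<sigma> \<theta> ys zs = 0"
      using f1 f2 by (simp add: zs_def A_def Let_def)
  qed
  show ?thesis using A B by blast
qed


end
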